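(* Let $G$ be a graph with exactly four vertices and $\operatorname{sdim}G=2$. Then $R_G\le\frac{\sqrt2}{2}$.
   Context: A unit-distance embedding of a graph $G$ in $\mathbb{R}^n$ is an injective map $f$ from the vertex set of $G$ to $\mathbb{R}^n$ such that $|f(u)-f(v)|=1$ for every edge $uv$ and no point $f(w)$ lies on the segment $[f(u),f(v)]$ for an edge $uv$ with $w\notin\{u,v\}$. $G$ admits a spherical embedding of dimension $k$ and radius $r$ if $G$ has a unit-distance embedding in $\mathbb{R}^k$ all of whose vertices lie on a sphere $\{x\in\mathbb{R}^k:|x-c|=r\}$. $\operatorname{sdim}G$ is the least $k$ such that $G$ admits a spherical embedding of dimension $k$ and some radius $r<1$. $R_G$ is the infimum of all $r<1$ such that $G$ admits a spherical embedding of dimension $\operatorname{sdim}G$ and radius $r$. *)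

theory Defs
  imports Complex_Main
begin

text \<open>Points of R^k are represented as functions nat => real vanishing at all
  coordinates i >= k (so the dimension k can vary inside a statement).\<close>

definition euclid :: "nat \<Rightarrow> (nat \<Rightarrow> real) set" where
  "euclid k = {x. \<forall>i\<ge>k. x i = 0}"

definition edist :: "nat \<Rightarrow> (nat \<Rightarrow> real) \<Rightarrow> (nat \<Rightarrow> real) \<Rightarrow> real" where
  "edist k x y = sqrt (\<Sum>i<k. (x i - y i)^2)"

definition seg :: "(nat \<Rightarrow> real) \<Rightarrow> (nat \<Rightarrow> real) \<Rightarrow> (nat \<Rightarrow> real) set" where
  "seg a b = {(\<lambda>i. (1 - t) * a i + t * b i) | t. 0 \<le> t \<and> t \<le> 1}"

definition unit_distance_embedding ::
  "'a set \<Rightarrow> ('a \<Rightarrow> 'a \<Rightarrow> bool) \<Rightarrow> nat \<Rightarrow> ('a \<Rightarrow> nat \<Rightarrow> real) \<Rightarrow> bool" where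
  "unit_distance_embedding V E k f \<longleftrightarrow>
     f ` V \<subseteq> euclid k \<and> inj_on f V \<and>
     (\<forall>u\<in>V. \<forall>v\<in>V. E u v \<longrightarrow> edist k (f u) (f v) = 1) \<and>
     (\<forall>u\<in>V. \<forall>v\<in>V. \<forall>w\<in>V. E u v \<and> w \<noteq> u \<and> w \<noteq> v \<longrightarrow> f w \<notin> seg (f u) (f v))"

definition spherical_embedding ::
  "'a set \<Rightarrow> ('a \<Rightarrow> 'a \<Rightarrow> bool) \<Rightarrow> nat \<Rightarrow> real \<Rightarrow> bool" where
  "spherical_embedding V E k r \<longleftrightarrow>
     (\<exists>f c. unit_distance_embedding V E k f \<and> c \<in> euclid k \<and>
            (\<forall>v\<in>V. edist k (f v) c = r))"

definition sdim :: "'a set \<Rightarrow> ('a \<Rightarrow> 'a \<Rightarrow> bool) \<Rightarrow> nat" where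
  "sdim V E = (LEAST k. \<exists>r<1. spherical_embedding V E k r)"

definition R_G :: "'a set \<Rightarrow> ('a \<Rightarrow> 'a \<Rightarrow> bool) \<Rightarrow> real" where
  "R_G V E = Inf {r. r < 1 \<and> spherical_embedding V E (sdim V E) r}"

end

theory Submission
  imports Defs
begin

definition pt :: "real \<Rightarrow> real \<Rightarrow> nat \<Rightarrow> real" where
  "pt a b = (\<lambda>i. if i = 0 then a else if i = 1 then b else 0)"

lemma edist2: "edist 2 x y = sqrt ((x 0 - y 0)^2 + (x 1 - y 1)^2)"
  by (simp add: edist_def numeral_2_eq_2 lessThan_Suc)

lemma pt_euclid: "pt a b \<in> euclid 2"
  by (simp add: pt_def euclid_def)

lemma pt_eq: "pt a b = pt c d \<longleftrightarrow> a = c \<and> b = d"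
  by (auto simp: pt_def fun_eq_iff)

lemma euclid2_eq: "x \<in> euclid 2 \<Longrightarrow> y \<in> euclid 2 \<Longrightarrow> x 0 = y 0 \<Longrightarrow> x 1 = y 1 \<Longrightarrow> x = y"
proof (rule ext)
  fix i assume a: "x \<in> euclid 2" "y \<in> euclid 2" "x 0 = y 0" "x 1 = y 1"
  show "x i = y i"
  proof (cases "i < 2")
    case True then have "i = 0 \<or> i = 1" by auto
    then show ?thesis using a by auto
  next
    case False then show ?thesis using a by (simp add: euclid_def)
  qed
qed

lemma seg_circle:
  assumes "a^2 + b^2 = R^2" "c^2 + d^2 = R^2" "x^2 + y^2 = R^2"
    and "(x, y) \<noteq> (a, b)" "(x, y) \<noteq> (c, d)"
  shows "pt x y \<notin> seg (pt a b) (pt c d)"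
proof
  assume "pt x y \<in> seg (pt a b) (pt c d)"
  then obtain t where t: "0 \<le> t" "t \<le> 1" "pt x y = (\<lambda>i. (1 - t) * pt a b i + t * pt c d i)"
    unfolding seg_def by blast
  have x: "x = (1 - t) * a + t * c" using fun_cong[OF t(3), of 0] by (simp add: pt_def)
  have y: "y = (1 - t) * b + t * d" using fun_cong[OF t(3), of 1] by (simp add: pt_def)
  have "x^2 + y^2 = (1 - t) * (a^2 + b^2) + t * (c^2 + d^2) - t * (1 - t) * ((a - c)^2 + (b - d)^2)"
    unfolding x y by (simp add: power2_eq_square algebra_simps)
  with assms(1-3) have "t * (1 - t) * ((a - c)^2 + (b - d)^2) = 0"
    by (simp add: algebra_simps)
  moreover have "(a - c)^2 + (b - d)^2 \<noteq> 0"
  proof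
    assume "(a - c)^2 + (b - d)^2 = 0"
    then have "a = c" "b = d" by (auto simp: sum_power2_eq_zero_iff)
    then have "t * (a - c) = 0" by simp
    hence "x = a" "y = b" using x y \<open>a = c\<close> \<open>b = d\<close> by (auto simp: algebra_simps)
    thus False using assms(4) by simp
  qed
  ultimately have "t = 0 \<or> t = 1" by auto
  then show False using x y assms(4,5) by auto
qed

lemma circ_emb:
  fixes X Y :: "'a \<Rightarrow> real"
  assumes "\<forall>v\<in>V. X v ^2 + Y v ^2 = R^2" "R \<ge> 0"
    and inj: "inj_on (\<lambda>v. (X v, Y v)) V"
    and "\<forall>u\<in>V. \<forall>v\<in>V. E u v \<longrightarrow> (X u - X v)^2 + (Y u - Y v)^2 = 1"
  shows "spherical_embedding V E 2 R"
  unfolding spherical_embedding_def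
proof (intro exI conjI)
  let ?f = "\<lambda>v. pt (X v) (Y v)"
  show "pt 0 0 \<in> euclid 2" by (rule pt_euclid)
  show "\<forall>v\<in>V. edist 2 (?f v) (pt 0 0) = R"
    using assms(1,2) by (simp add: edist2 pt_def)
  show "unit_distance_embedding V E 2 ?f"
    unfolding unit_distance_embedding_def
  proof (intro conjI)
    show "?f ` V \<subseteq> euclid 2" using pt_euclid by auto
    show "inj_on ?f V" using inj by (auto simp: inj_on_def pt_eq)
    show "\<forall>u\<in>V. \<forall>v\<in>V. E u v \<longrightarrow> edist 2 (?f u) (?f v) = 1"
      using assms(4) by (simp add: edist2 pt_def)
    show "\<forall>u\<in>V. \<forall>v\<in>V. \<forall>w\<in>V. E u v \<and> w \<noteq> u \<and> w \<noteq> v \<longrightarrow> ?f w \<notin> seg (?f u) (?f v)"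
    proof (intro ballI impI)
      fix u v w assume uvw: "u \<in> V" "v \<in> V" "w \<in> V" "E u v \<and> w \<noteq> u \<and> w \<noteq> v"
      have "(X w, Y w) \<noteq> (X u, Y u)" "(X w, Y w) \<noteq> (X v, Y v)"
        using inj uvw by (auto simp: inj_on_def)
      then show "?f w \<notin> seg (?f u) (?f v)"
        using seg_circle assms(1) uvw by blast
    qed
  qed
qed


lemma square_emb:
  assumes dist: "distinct [w0, w1, w2, w3]" and V: "V = {w0, w1, w2, w3}"
    and ne: "\<not> E w0 w2" "\<not> E w2 w0" "\<not> E w1 w3" "\<not> E w3 w1"
    and irr: "\<forall>v. \<not> E v v"
  shows "spherical_embedding V E 2 (sqrt 2 / 2)"
proof -
  define X where "X v = (if v = w0 \<or> v = w3 then 1/2 else - 1/2 :: real)" for v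
  define Y where "Y v = (if v = w0 \<or> v = w1 then 1/2 else - 1/2 :: real)" for v
  have r: "(sqrt 2 / 2)^2 = 1/2" by (simp add: power_divide)
  show ?thesis
  proof (rule circ_emb[where X = X and Y = Y])
    show "\<forall>v\<in>V. X v ^2 + Y v ^2 = (sqrt 2 / 2)^2" unfolding r X_def Y_def
      by (auto simp: power2_eq_square)
    show "sqrt 2 / 2 \<ge> 0" by simp
    show "inj_on (\<lambda>v. (X v, Y v)) V" using dist unfolding V X_def Y_def inj_on_def by auto
    show "\<forall>u\<in>V. \<forall>v\<in>V. E u v \<longrightarrow> (X u - X v)^2 + (Y u - Y v)^2 = 1"
      using dist ne irr unfolding V X_def Y_def by auto
  qed
qed

lemma tri_emb:
  assumes dist: "distinct [w0, w1, w2, w3]" and V: "V = {w0, w1, w2, w3}"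
    and ne: "\<forall>x. \<not> E w3 x \<and> \<not> E x w3"
    and irr: "\<forall>v. \<not> E v v"
  shows "spherical_embedding V E 2 (sqrt 3 / 3)"
proof -
  define s where "s = sqrt (3::real)"
  have s2: "s^2 = 3" unfolding s_def by simp
  have s0: "s > 0" unfolding s_def by simp
  define X where "X v = (if v = w1 then 1/2 else if v = w2 then - 1/2 else 0 :: real)" for v
  define Y where "Y v = (if v = w0 then s/3 else if v = w3 then - s/3 else - s/6)" for v
  have r: "(s / 3)^2 = 1/3" using s2 by (simp add: power_divide)
  have d: "(1/2 :: real)^2 + (s/3 + s/6)^2 = 1"
  proof -
    have "(s/3 + s/6)^2 = s^2/4" by (simp add: power2_eq_square field_simps)
    then show ?thesis using s2 by (simp add: power2_eq_square)
  qed
  have d': "(- 1/2 :: real)^2 + (s/3 + s/6)^2 = 1" using d by (simp add: power2_eq_square)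
  have d'': "(1/2 :: real)^2 + (- s/6 - s/3)^2 = 1" using d by (simp add: power2_eq_square algebra_simps)
  have d''': "(- 1/2 :: real)^2 + (- s/6 - s/3)^2 = 1" using d by (simp add: power2_eq_square algebra_simps)
  have sq: "(1/2 :: real)^2 + (s/6)^2 = 1/3" using s2 by (simp add: power2_eq_square field_simps)
  show ?thesis unfolding s_def[symmetric]
  proof (rule circ_emb[where X = X and Y = Y])
    show "\<forall>v\<in>V. X v ^2 + Y v ^2 = (s / 3)^2" unfolding r X_def Y_def using dist sq r
      by (auto simp: V power2_eq_square)
    show "s / 3 \<ge> 0" using s0 by simp
    show "inj_on (\<lambda>v. (X v, Y v)) V" using dist s0 unfolding V X_def Y_def inj_on_def by auto
    show "\<forall>u\<in>V. \<forall>v\<in>V. E u v \<longrightarrow> (X u - X v)^2 + (Y u - Y v)^2 = 1"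
      using dist ne irr d d' d'' d''' unfolding V X_def Y_def by (auto simp: algebra_simps)
  qed
qed


lemma cross_lemma:
  fixes w1 w2 u1 u2 v1 v2 :: real
  assumes w: "w1^2 + w2^2 \<noteq> 0"
    and "u1 * w1 + u2 * w2 = v1 * w1 + v2 * w2"
    and "u2 * w1 - u1 * w2 = v2 * w1 - v1 * w2"
  shows "u1 = v1 \<and> u2 = v2"
proof -
  have "u1 * (w1^2 + w2^2) = (u1 * w1 + u2 * w2) * w1 - (u2 * w1 - u1 * w2) * w2"
    by (simp add: power2_eq_square algebra_simps)
  also have "\<dots> = (v1 * w1 + v2 * w2) * w1 - (v2 * w1 - v1 * w2) * w2" by (simp only: assms(2,3))
  also have "\<dots> = v1 * (w1^2 + w2^2)" by (simp add: power2_eq_square algebra_simps)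
  finally have 1: "u1 = v1" using w by (metis mult_right_cancel)
  have "u2 * (w1^2 + w2^2) = (u1 * w1 + u2 * w2) * w2 + (u2 * w1 - u1 * w2) * w1"
    by (simp add: power2_eq_square algebra_simps)
  also have "\<dots> = (v1 * w1 + v2 * w2) * w2 + (v2 * w1 - v1 * w2) * w1" by (simp only: assms(2,3))
  also have "\<dots> = v2 * (w1^2 + w2^2)" by (simp add: power2_eq_square algebra_simps)
  finally have 2: "u2 = v2" using w by (metis mult_right_cancel)
  show ?thesis using 1 2 by simp
qed

lemma lagrange: "(u2 * w1 - u1 * w2)^2 = (u1^2 + u2^2) * (w1^2 + w2^2) - (u1 * w1 + u2 * w2)^2"
  for u1 u2 w1 w2 :: real
  by (simp add: power2_eq_square algebra_simps)

lemma three_pts: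
  fixes w1 w2 u1 u2 v1 v2 z1 z2 k q :: real
  assumes w: "w1^2 + w2^2 \<noteq> 0"
    and "u1 * w1 + u2 * w2 = k" "v1 * w1 + v2 * w2 = k" "z1 * w1 + z2 * w2 = k"
    and "u1^2 + u2^2 = q" "v1^2 + v2^2 = q" "z1^2 + z2^2 = q"
  shows "(u1 = v1 \<and> u2 = v2) \<or> (u1 = z1 \<and> u2 = z2) \<or> (v1 = z1 \<and> v2 = z2)"
proof -
  define cu where "cu = u2 * w1 - u1 * w2"
  define cv where "cv = v2 * w1 - v1 * w2"
  define cz where "cz = z2 * w1 - z1 * w2"
  have "cu^2 = cv^2" "cu^2 = cz^2" unfolding cu_def cv_def cz_def lagrange using assms by simp_all
  then have "cu = cv \<or> cu = cz \<or> cv = cz" by (auto simp: power2_eq_iff)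
  then show ?thesis using cross_lemma[OF w] assms unfolding cu_def cv_def cz_def by metis
qed

lemma deg_le2:
  assumes ude: "unit_distance_embedding V E 2 f" and c: "c \<in> euclid 2"
    and sph: "\<forall>v\<in>V. edist 2 (f v) c = r"
    and vs: "v \<in> V" "x \<in> V" "y \<in> V" "z \<in> V"
    and e: "E v x" "E v y" "E v z"
  shows "x = y \<or> x = z \<or> y = z"
proof -
  have fe: "f ` V \<subseteq> euclid 2" and inj: "inj_on f V"
    and un: "\<forall>u\<in>V. \<forall>v\<in>V. E u v \<longrightarrow> edist 2 (f u) (f v) = 1"
    using ude unfolding unit_distance_embedding_def by auto
  have r0: "r \<ge> 0" using sph vs(1) by (metis edist2 real_sqrt_ge_zero sum_power2_ge_zero)
  have sq: "\<And>a. a \<in> V \<Longrightarrow> (f a 0 - c 0)^2 + (f a 1 - c 1)^2 = r^2"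
    using sph r0 by (metis edist2 real_sqrt_pow2 sum_power2_ge_zero)
  have one: "\<And>a. a \<in> V \<Longrightarrow> E v a \<Longrightarrow> (f a 0 - f v 0)^2 + (f a 1 - f v 1)^2 = 1"
  proof -
    fix a assume "a \<in> V" "E v a"
    then have "edist 2 (f a) (f v) = 1" using un vs(1)
      by (metis edist2 power2_commute)
    then show "(f a 0 - f v 0)^2 + (f a 1 - f v 1)^2 = 1" unfolding edist2
      by (metis real_sqrt_eq_1_iff)
  qed
  define w1 where "w1 = f v 0 - c 0"
  define w2 where "w2 = f v 1 - c 1"
  have w: "w1^2 + w2^2 \<noteq> 0"
  proof
    assume h: "w1^2 + w2^2 = 0"
    then have "r = 0" using sq[OF vs(1)] r0 unfolding w1_def w2_def by simp
    moreover have "w1 = 0" "w2 = 0" using h by (auto simp: sum_power2_eq_zero_iff)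
    ultimately show False using sq[OF vs(2)] one[OF vs(2) e(1)] unfolding w1_def w2_def by simp
  qed
  have dot: "\<And>a. a \<in> V \<Longrightarrow> E v a \<Longrightarrow>
     (f a 0 - c 0) * w1 + (f a 1 - c 1) * w2 = (2 * r^2 - 1) / 2"
  proof -
    fix a assume a: "a \<in> V" "E v a"
    have "(f a 0 - f v 0)^2 + (f a 1 - f v 1)^2
       = ((f a 0 - c 0)^2 + (f a 1 - c 1)^2) + (w1^2 + w2^2) - 2 * ((f a 0 - c 0) * w1 + (f a 1 - c 1) * w2)"
      unfolding w1_def w2_def by (simp add: power2_eq_square algebra_simps)
    then show "(f a 0 - c 0) * w1 + (f a 1 - c 1) * w2 = (2 * r^2 - 1) / 2"
      using one[OF a] sq[OF a(1)] sq[OF vs(1)] unfolding w1_def w2_def by simp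
  qed
  have "(f x 0 - c 0 = f y 0 - c 0 \<and> f x 1 - c 1 = f y 1 - c 1) \<or>
        (f x 0 - c 0 = f z 0 - c 0 \<and> f x 1 - c 1 = f z 1 - c 1) \<or>
        (f y 0 - c 0 = f z 0 - c 0 \<and> f y 1 - c 1 = f z 1 - c 1)"
    by (rule three_pts[OF w dot[OF vs(2) e(1)] dot[OF vs(3) e(2)] dot[OF vs(4) e(3)]
          sq[OF vs(2)] sq[OF vs(3)] sq[OF vs(4)]])
  then have "f x = f y \<or> f x = f z \<or> f y = f z"
    using euclid2_eq[of "f x" "f y"] euclid2_eq[of "f x" "f z"] euclid2_eq[of "f y" "f z"] fe vs
    by auto
  then show ?thesis using inj vs by (auto simp: inj_on_def)
qed


theorem mainTheorem14:
  fixes V :: "'a set" and E :: "'a \<Rightarrow> 'a \<Rightarrow> bool"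
  assumes "card V = 4"
    and "\<forall>u v. E u v \<longrightarrow> u \<in> V \<and> v \<in> V"
    and "\<forall>u v. E u v \<longrightarrow> E v u"
    and "\<forall>v. \<not> E v v"
    and "\<exists>k r. r < 1 \<and> spherical_embedding V E k r"
    and "sdim V E = 2"
  shows "R_G V E \<le> sqrt 2 / 2"
proof -
  have "\<exists>a b c d. distinct [a, b, c, d] \<and> V = {a, b, c, d}"
    using assms(1) by (auto simp: card_Suc_eq numeral_eq_Suc)
  then obtain a b c d where dist: "distinct [a, b, c, d]" and V: "V = {a, b, c, d}" by blast
  have "\<exists>r<1. spherical_embedding V E (sdim V E) r"
    unfolding sdim_def by (rule LeastI_ex) (use assms(5) in blast)
  then obtain r0 f c0 where ude: "unit_distance_embedding V E 2 f" and c0: "c0 \<in> euclid 2"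
    and sph: "\<forall>v\<in>V. edist 2 (f v) c0 = r0"
    using assms(6) unfolding spherical_embedding_def by auto
  have D: "\<And>v x y z. v \<in> V \<Longrightarrow> x \<in> V \<Longrightarrow> y \<in> V \<Longrightarrow> z \<in> V \<Longrightarrow> E v x \<Longrightarrow> E v y \<Longrightarrow> E v z
      \<Longrightarrow> x = y \<or> x = z \<or> y = z"
    using deg_le2[OF ude c0 sph] by blast
  have sym: "\<And>x y. E x y \<longleftrightarrow> E y x" using assms(3) by blast
  have irr: "\<forall>v. \<not> E v v" by (rule assms(4))
  have outside: "\<And>x y. x \<notin> V \<Longrightarrow> \<not> E x y \<and> \<not> E y x" using assms(2) by blast
  have da: "\<not> (E a b \<and> E a c \<and> E a d)" using D[of a b c d] dist V by auto
  have db: "\<not> (E b a \<and> E b c \<and> E b d)" using D[of b a c d] dist V by auto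
  have dc: "\<not> (E c a \<and> E c b \<and> E c d)" using D[of c a b d] dist V by auto
  have dd: "\<not> (E d a \<and> E d b \<and> E d c)" using D[of d a b c] dist V by auto
  have isoI: "\<And>w. (\<And>x. x \<in> V \<Longrightarrow> \<not> E w x) \<Longrightarrow> (\<forall>x. \<not> E w x \<and> \<not> E x w)"
    using outside sym by blast
  have emb: "spherical_embedding V E 2 (sqrt 2 / 2) \<or> spherical_embedding V E 2 (sqrt 3 / 3)"
  proof -
    have "(\<not> E a b \<and> \<not> E a c \<and> \<not> E a d) \<or> (\<not> E b a \<and> \<not> E b c \<and> \<not> E b d) \<or>
          (\<not> E c a \<and> \<not> E c b \<and> \<not> E c d) \<or> (\<not> E d a \<and> \<not> E d b \<and> \<not> E d c) \<or>
          (\<not> E a c \<and> \<not> E b d) \<or> (\<not> E a d \<and> \<not> E b c) \<or> (\<not> E a b \<and> \<not> E c d)"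
      using da db dc dd sym by blast
    then show ?thesis
    proof (elim disjE)
      assume h: "\<not> E a b \<and> \<not> E a c \<and> \<not> E a d"
      have "\<forall>x. \<not> E a x \<and> \<not> E x a" using h irr V by (intro isoI) auto
      then show ?thesis using tri_emb[of b c d a V E] dist V irr by (auto simp: insert_commute)
    next
      assume h: "\<not> E b a \<and> \<not> E b c \<and> \<not> E b d"
      have "\<forall>x. \<not> E b x \<and> \<not> E x b" using h irr V by (intro isoI) auto
      then show ?thesis using tri_emb[of a c d b V E] dist V irr by (auto simp: insert_commute)
    next
      assume h: "\<not> E c a \<and> \<not> E c b \<and> \<not> E c d"
      have "\<forall>x. \<not> E c x \<and> \<not> E x c" using h irr V by (intro isoI) auto
      then show ?thesis using tri_emb[of a b d c V E] dist V irr by (auto simp: insert_commute)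
    next
      assume h: "\<not> E d a \<and> \<not> E d b \<and> \<not> E d c"
      have "\<forall>x. \<not> E d x \<and> \<not> E x d" using h irr V by (intro isoI) auto
      then show ?thesis using tri_emb[of a b c d V E] dist V irr by (auto simp: insert_commute)
    next
      assume h: "\<not> E a c \<and> \<not> E b d"
      then show ?thesis using square_emb[of a b c d V E] dist V irr sym by (auto simp: insert_commute)
    next
      assume h: "\<not> E a d \<and> \<not> E b c"
      then show ?thesis using square_emb[of a b d c V E] dist V irr sym by (auto simp: insert_commute)
    next
      assume h: "\<not> E a b \<and> \<not> E c d"
      then show ?thesis using square_emb[of a c b d V E] dist V irr sym by (auto simp: insert_commute)
    qed
  qed
  define S where "S = {r. r < 1 \<and> spherical_embedding V E (sdim V E) r}"
  have bdd: "bdd_below S"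
  proof (rule bdd_belowI[of _ 0])
    fix r assume "r \<in> S"
    then obtain g cc where "\<forall>v\<in>V. edist 2 (g v) cc = r"
      unfolding S_def spherical_embedding_def assms(6) by auto
    then have "edist 2 (g a) cc = r" using V by auto
    then show "0 \<le> r" unfolding edist2 by auto
  qed
  have s2: "sqrt 2 / 2 < (1::real)"
  proof -
    have "(sqrt 2)^2 < (2::real)^2" by simp
    then have "sqrt 2 < (2::real)" by (rule power_less_imp_less_base) simp
    then show ?thesis by simp
  qed
  have s3: "sqrt 3 / 3 < sqrt 2 / (2::real)"
  proof -
    have "(sqrt 3 / 3)^2 < (sqrt 2 / (2::real))^2" by (simp add: power_divide)
    then show ?thesis by (rule power_less_imp_less_base) simp
  qed
  show ?thesis unfolding R_G_def S_def[symmetric]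
    using emb
  proof
    assume "spherical_embedding V E 2 (sqrt 2 / 2)"
    then have "sqrt 2 / 2 \<in> S" unfolding S_def assms(6) using s2 by auto
    then show "Inf S \<le> sqrt 2 / 2" using bdd by (rule cInf_lower)
  next
    assume "spherical_embedding V E 2 (sqrt 3 / 3)"
    then have "sqrt 3 / 3 \<in> S" unfolding S_def assms(6) using s2 s3 by auto
    then have "Inf S \<le> sqrt 3 / 3" using bdd by (rule cInf_lower)
    then show "Inf S \<le> sqrt 2 / 2" using s3 by linarith
  qed
qed

end
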